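(* There exists a $\mathcal{C}^\infty$ injective map $\Phi$ from the closed unit ball $\overline{\mathbb{B}}\subset\mathbb{C}^5$ into $\mathbb{C}^8$ whose restriction to the open ball $\mathbb{B}$ is a holomorphic embedding, such that $\Phi(\overline{\mathbb{B}})$ has no basis of open Stein neighborhoods in $\mathbb{C}^8$. *)

theory Defs
  imports "HOL-Analysis.Analysis" "HOL-Library.Numeral_Type"
begin

text \<open>Real C^infinity on an open set: all iterated (Frechet) directional derivatives
  exist and are continuous.\<close>
fun Cdirs :: "'a::real_normed_vector set \<Rightarrow> ('a \<Rightarrow> 'b::real_normed_vector) \<Rightarrow> 'a list \<Rightarrow> bool" where
  "Cdirs S f [] = continuous_on S f"
| "Cdirs S f (v # vs) =
     ((\<forall>x\<in>S. f differentiable (at x)) \<and> Cdirs S (\<lambda>x. frechet_derivative f (at x) v) vs)"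

definition smooth_on :: "'a::real_normed_vector set \<Rightarrow> ('a \<Rightarrow> 'b::real_normed_vector) \<Rightarrow> bool" where
  "smooth_on S f \<longleftrightarrow> open S \<and> (\<forall>vs. Cdirs S f vs)"

definition smooth_on_set :: "'a::real_normed_vector set \<Rightarrow> ('a \<Rightarrow> 'b::real_normed_vector) \<Rightarrow> bool" where
  "smooth_on_set A f \<longleftrightarrow> (\<exists>U g. open U \<and> A \<subseteq> U \<and> smooth_on U g \<and> (\<forall>x\<in>A. g x = f x))"

definition holo_map_on :: "(complex^'n) set \<Rightarrow> (complex^'n \<Rightarrow> complex^'m) \<Rightarrow> bool" where
  "holo_map_on S f \<longleftrightarrow> open S \<and>
     (\<forall>x\<in>S. \<exists>L. (f has_derivative L) (at x) \<and> (\<forall>c v. L (c *s v) = c *s L v))"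

definition holo_fun_on :: "(complex^'n) set \<Rightarrow> (complex^'n \<Rightarrow> complex) \<Rightarrow> bool" where
  "holo_fun_on S f \<longleftrightarrow> open S \<and>
     (\<forall>x\<in>S. \<exists>L. (f has_derivative L) (at x) \<and> (\<forall>c v. L (c *s v) = c * L v))"

definition holo_embedding :: "(complex^'n) set \<Rightarrow> (complex^'n \<Rightarrow> complex^'m) \<Rightarrow> bool" where
  "holo_embedding S f \<longleftrightarrow> holo_map_on S f \<and> inj_on f S \<and>
     (\<forall>x\<in>S. inj (frechet_derivative f (at x))) \<and>
     (\<exists>g. homeomorphism S (f ` S) f g)"

definition holo_hull :: "(complex^'n) set \<Rightarrow> (complex^'n) set \<Rightarrow> (complex^'n) set" where
  "holo_hull \<Omega> K = {z \<in> \<Omega>. \<forall>f. holo_fun_on \<Omega> f \<longrightarrow>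
       (\<forall>B. (\<forall>w\<in>K. norm (f w) \<le> B) \<longrightarrow> norm (f z) \<le> B)}"

definition stein_open :: "(complex^'n) set \<Rightarrow> bool" where
  "stein_open \<Omega> \<longleftrightarrow> open \<Omega> \<and>
     (\<forall>x\<in>\<Omega>. \<forall>y\<in>\<Omega>. x \<noteq> y \<longrightarrow> (\<exists>f. holo_fun_on \<Omega> f \<and> f x \<noteq> f y)) \<and>
     (\<forall>K. compact K \<and> K \<subseteq> \<Omega> \<longrightarrow> compact (holo_hull \<Omega> K))"

definition has_stein_nbhd_basis :: "(complex^'n) set \<Rightarrow> bool" where
  "has_stein_nbhd_basis A \<longleftrightarrow>
     (\<forall>U. open U \<and> A \<subseteq> U \<longrightarrow> (\<exists>V. stein_open V \<and> A \<subseteq> V \<and> V \<subseteq> U))"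

end

theory Submission
  imports Defs "HOL-Complex_Analysis.Complex_Analysis"
begin

no_notation fps_nth (infixl \<open>$\<close> 75)


definition sm :: "('a::real_normed_vector \<Rightarrow> 'b::real_normed_vector) \<Rightarrow> bool" where
  "sm f \<longleftrightarrow> (\<forall>vs. Cdirs UNIV f vs)"

lemma fd_eq: "(f has_derivative f') (at x) \<Longrightarrow> frechet_derivative f (at x) v = f' v"
  using frechet_derivative_at by metis

lemma sm_D: assumes "sm f"
  shows "continuous_on UNIV f" "\<And>x. f differentiable (at x)" "\<And>v. sm (\<lambda>x. frechet_derivative f (at x) v)"
proof -
  show "continuous_on UNIV f" using assms[unfolded sm_def, rule_format, of "[]"] by simp
  fix x show "f differentiable (at x)" using assms[unfolded sm_def, rule_format, of "[0]"] by simp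
next
  fix v show "sm (\<lambda>x. frechet_derivative f (at x) v)"
    unfolding sm_def using assms[unfolded sm_def] by (metis Cdirs.simps(2))
qed

lemma Cdirs_const: "Cdirs UNIV (\<lambda>x. c) vs"
proof (induction vs arbitrary: c)
  case Nil then show ?case by simp
next
  case (Cons v vs)
  have "(\<lambda>x. frechet_derivative (\<lambda>x. c) (at x) v) = (\<lambda>x. 0)"
    by (rule ext, rule fd_eq, rule has_derivative_const)
  then show ?case using Cons by simp
qed

lemma sm_const: "sm (\<lambda>x. c)" unfolding sm_def using Cdirs_const by blast

lemma Cdirs_lin: "bounded_linear l \<Longrightarrow> Cdirs UNIV l vs"
proof (cases vs)
  case Nil
  assume "bounded_linear l" then show ?thesis using Nil
    by (simp add: linear_continuous_on)
next
  case (Cons v ws)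
  assume l: "bounded_linear l"
  have "(\<lambda>x. frechet_derivative l (at x) v) = (\<lambda>x. l v)"
    by (rule ext, rule fd_eq, rule bounded_linear.has_derivative[OF l], rule has_derivative_ident)
  then show ?thesis using Cons Cdirs_const l
    by (simp add: bounded_linear_imp_differentiable)
qed

lemma sm_lin: "bounded_linear l \<Longrightarrow> sm l" unfolding sm_def using Cdirs_lin by blast

lemma Cdirs_add: "Cdirs UNIV f vs \<Longrightarrow> Cdirs UNIV g vs \<Longrightarrow> Cdirs UNIV (\<lambda>x. f x + g x) vs"
proof (induction vs arbitrary: f g)
  case Nil then show ?case by (simp add: continuous_on_add)
next
  case (Cons v vs)
  have df: "\<And>x. f differentiable (at x)" and dg: "\<And>x. g differentiable (at x)" using Cons by auto
  have "(\<lambda>x. frechet_derivative (\<lambda>x. f x + g x) (at x) v) =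
    (\<lambda>x. frechet_derivative f (at x) v + frechet_derivative g (at x) v)"
    apply (rule ext, rule fd_eq[of _ "\<lambda>h. frechet_derivative f (at _) h + frechet_derivative g (at _) h"])
    using df dg frechet_derivative_works has_derivative_add by blast
  then show ?case using Cons df dg by auto
qed

lemma sm_add: "sm f \<Longrightarrow> sm g \<Longrightarrow> sm (\<lambda>x. f x + g x)" unfolding sm_def using Cdirs_add by blast

lemma Cdirs_bilin: assumes b: "bounded_bilinear b"
  shows "sm f \<Longrightarrow> sm g \<Longrightarrow> Cdirs UNIV (\<lambda>x. b (f x) (g x)) vs"
proof (induction vs arbitrary: f g)
  case Nil then show ?case
    using bounded_bilinear.continuous_on[OF b sm_D(1)[OF Nil(1)] sm_D(1)[OF Nil(2)]] by simp
next
  case (Cons v vs)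
  have df: "\<And>x. f differentiable (at x)" and dg: "\<And>x. g differentiable (at x)" using Cons sm_D by blast+
  have hd: "\<And>x. ((\<lambda>x. b (f x) (g x)) has_derivative
     (\<lambda>h. b (f x) (frechet_derivative g (at x) h) + b (frechet_derivative f (at x) h) (g x))) (at x)"
    by (rule bounded_bilinear.FDERIV[OF b]; metis df dg frechet_derivative_works)
  have "(\<lambda>x. frechet_derivative (\<lambda>x. b (f x) (g x)) (at x) v) =
    (\<lambda>x. b (f x) (frechet_derivative g (at x) v) + b (frechet_derivative f (at x) v) (g x))"
    by (rule ext, rule fd_eq, rule hd)
  moreover have "Cdirs UNIV (\<lambda>x. b (f x) (frechet_derivative g (at x) v) + b (frechet_derivative f (at x) v) (g x)) vs"
    by (rule Cdirs_add; rule Cons.IH; rule Cons.prems sm_D(3)[OF Cons.prems(1)] sm_D(3)[OF Cons.prems(2)])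
  moreover have "\<forall>x\<in>UNIV. (\<lambda>x. b (f x) (g x)) differentiable (at x)" using hd differentiableI by blast
  ultimately show ?case by simp
qed

lemma sm_bilin: "bounded_bilinear b \<Longrightarrow> sm f \<Longrightarrow> sm g \<Longrightarrow> sm (\<lambda>x. b (f x) (g x))"
  unfolding sm_def[of "\<lambda>x. b (f x) (g x)"] using Cdirs_bilin by metis

lemma sm_mult: "sm f \<Longrightarrow> sm g \<Longrightarrow> sm (\<lambda>x. f x * (g x :: 'a::real_normed_algebra))"
  by (rule sm_bilin[OF bounded_bilinear_mult])

lemma Cdirs_linc: assumes l: "bounded_linear l"
  shows "sm f \<Longrightarrow> Cdirs UNIV (\<lambda>x. l (f x)) vs"
proof (induction vs arbitrary: f)
  case Nil then show ?case
    using continuous_on_compose[OF sm_D(1)[OF Nil] linear_continuous_on[OF l]] by (simp add: o_def)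
next
  case (Cons v vs)
  have df: "\<And>x. f differentiable (at x)" using Cons sm_D by blast+
  have hd: "\<And>x. ((\<lambda>x. l (f x)) has_derivative (\<lambda>h. l (frechet_derivative f (at x) h))) (at x)"
    by (rule bounded_linear.has_derivative[OF l]; metis df frechet_derivative_works)
  have "(\<lambda>x. frechet_derivative (\<lambda>x. l (f x)) (at x) v) = (\<lambda>x. l (frechet_derivative f (at x) v))"
    by (rule ext, rule fd_eq, rule hd)
  moreover have "\<forall>x\<in>UNIV. (\<lambda>x. l (f x)) differentiable (at x)" using hd differentiableI by blast
  moreover have "Cdirs UNIV (\<lambda>x. l (frechet_derivative f (at x) v)) vs"
    by (rule Cons.IH, rule sm_D(3)[OF Cons.prems])
  ultimately show ?case by simp
qed

lemma sm_linc: "bounded_linear l \<Longrightarrow> sm f \<Longrightarrow> sm (\<lambda>x. l (f x))"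
  unfolding sm_def[of "\<lambda>x. l (f x)"] using Cdirs_linc by metis



lemma exhaust_5:
  fixes x :: 5
  shows "x = 1 \<or> x = 2 \<or> x = 3 \<or> x = 4 \<or> x = 5"
proof (induct x)
  case (of_int z)
  then have "z = 0 \<or> z = 1 \<or> z = 2 \<or> z = 3 \<or> z = 4" by fastforce
  then show ?case by auto
qed

lemma UNIV_5: "UNIV = {1, 2, 3, 4, 5::5}"
  using exhaust_5 by auto

lemma distinct5: "(1::5) \<noteq> 2" "(1::5) \<noteq> 3" "(1::5) \<noteq> 4" "(1::5) \<noteq> 5"
  "(2::5) \<noteq> 3" "(2::5) \<noteq> 4" "(2::5) \<noteq> 5" "(3::5) \<noteq> 4" "(3::5) \<noteq> 5" "(4::5) \<noteq> 5"
  by simp_all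

lemma distinct8: "(1::8) \<noteq> 2" "(1::8) \<noteq> 5" "(5::8) \<noteq> 6" "(2::8) \<noteq> 6" "(1::8) \<noteq> 6"
  by simp_all

lemma normsq5: "(norm (x::complex^5))^2 = (cmod (x$1))^2 + (cmod (x$2))^2 + (cmod (x$3))^2 + (cmod (x$4))^2 + (cmod (x$5))^2"
  unfolding norm_vec_def L2_set_def UNIV_5 by (simp add: sum_nonneg)



definition E :: "8 \<Rightarrow> complex \<Rightarrow> complex^8" where
  "E k c = (\<chi> j. if j = k then c else 0)"

lemma E_nth[simp]: "E k c $ j = (if j = k then c else 0)"
  by (simp add: E_def)

lemma lin_E: "linear (E k)"
  by (rule linearI; simp add: vec_eq_iff)

lemma bl_E: "bounded_linear (E k)"
  using lin_E linear_conv_bounded_linear by blast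

definition Phi :: "complex^5 \<Rightarrow> complex^8" where
  "Phi x = E 1 (x$1) + E 2 (x$3) + E 3 (x$4) + E 4 (x$5) + E 5 (x$1 * x$2)
     + E 6 (x$2 * (1 - x$3 + 2 * (x$1 * x$2)))"

definition DPhi :: "complex^5 \<Rightarrow> complex^5 \<Rightarrow> complex^8" where
  "DPhi x v = E 1 (v$1) + E 2 (v$3) + E 3 (v$4) + E 4 (v$5) + E 5 (v$1 * x$2 + x$1 * v$2)
     + E 6 (v$2 * (1 - x$3 + 2 * (x$1 * x$2)) + x$2 * (2 * (v$1 * x$2 + x$1 * v$2) - v$3))"

lemma Phi_nth:
  "Phi x $ 1 = x$1" "Phi x $ 2 = x$3" "Phi x $ 3 = x$4" "Phi x $ 4 = x$5"
  "Phi x $ 5 = x$1 * x$2" "Phi x $ 6 = x$2 * (1 - x$3 + 2 * (x$1 * x$2))"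
  by (simp_all add: Phi_def)

lemma DPhi_nth:
  "DPhi x v $ 1 = v$1" "DPhi x v $ 2 = v$3" "DPhi x v $ 3 = v$4" "DPhi x v $ 4 = v$5"
  "DPhi x v $ 5 = v$1 * x$2 + x$1 * v$2"
  "DPhi x v $ 6 = v$2 * (1 - x$3 + 2 * (x$1 * x$2)) + x$2 * (2 * (v$1 * x$2 + x$1 * v$2) - v$3)"
  by (simp_all add: DPhi_def)

lemma d1: "((\<lambda>x::complex^5. x$i) has_derivative (\<lambda>v. v$i)) (at x)"
  by (rule bounded_linear_imp_has_derivative, rule bounded_linear_vec_nth)

lemma Phi_deriv: "(Phi has_derivative DPhi x) (at x)"
  unfolding Phi_def
  apply (rule has_derivative_eq_rhs)
   apply (rule derivative_intros d1 bounded_linear.has_derivative[OF bl_E])+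
  apply (simp add: fun_eq_iff DPhi_def algebra_simps)
  done

lemma sm_diff: "sm f \<Longrightarrow> sm g \<Longrightarrow> sm (\<lambda>x. f x - g x)"
proof -
  assume f: "sm f" and g: "sm g"
  have "sm (\<lambda>x. - g x)" by (rule sm_linc[OF bounded_linear_minus[OF bounded_linear_ident] g])
  from sm_add[OF f this] show ?thesis by simp
qed

lemma sm_Phi: "sm Phi"
proof -
  have c: "\<And>i. sm (\<lambda>x::complex^5. x$i)" by (rule sm_lin, rule bounded_linear_vec_nth)
  have k: "\<And>k c. sm (\<lambda>x::complex^5. c)" by (rule sm_const)
  have "sm (\<lambda>x::complex^5. x$2 * (1 - x$3 + 2 * (x$1 * x$2)))"
    by (intro sm_mult sm_add sm_diff c k)
  moreover have "sm (\<lambda>x::complex^5. x$1 * x$2)" by (intro sm_mult c)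
  ultimately show ?thesis unfolding Phi_def
    by (intro sm_add sm_linc[OF bl_E] c)
qed

lemma DPhi_clin: "DPhi x (c *s v) = c *s DPhi x v"
  by (simp add: DPhi_def vec_eq_iff algebra_simps)

lemma norm_comp_le: "cmod (x$i) \<le> norm (x::complex^5)"
  unfolding norm_vec_def by (rule member_le_L2_set) simp_all

lemma DPhi_inj0: assumes "norm x < 1" "DPhi x v = 0" shows "v = 0"
proof -
  have e: "\<And>j. DPhi x v $ j = 0" using assms(2) by simp
  have v1: "v$1 = 0" and v3: "v$3 = 0" and v4: "v$4 = 0" and v5: "v$5 = 0"
    using e[of 1] e[of 2] e[of 3] e[of 4] by (simp_all add: DPhi_nth)
  have a: "x$1 * v$2 = 0" using e[of 5] v1 by (simp add: DPhi_nth)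
  have b: "v$2 * (1 - x$3 + 2 * (x$1 * x$2)) + x$2 * (2 * (x$1 * v$2)) = 0"
    using e[of 6] v1 v3 by (simp add: DPhi_nth)
  have v2: "v$2 = 0"
  proof (cases "x$1 = 0")
    case True
    then have "v$2 * (1 - x$3) = 0" using b by simp
    moreover have "x$3 \<noteq> 1" using norm_comp_le[of x 3] assms(1) by auto
    ultimately show ?thesis by simp
  next
    case False then show ?thesis using a by simp
  qed
  show ?thesis unfolding vec_eq_iff using v1 v2 v3 v4 v5 exhaust_5 by (metis zero_index)
qed

lemma DPhi_inj: assumes "norm x < 1" shows "inj (DPhi x)"
proof (rule injI)
  fix u v assume "DPhi x u = DPhi x v"
  then have "DPhi x (u - v) = 0"
    using linear_diff[OF bounded_linear.linear[OF has_derivative_bounded_linear[OF Phi_deriv]]] by simp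
  then have "u - v = 0" by (rule DPhi_inj0[OF assms])
  then show "u = v" by simp
qed

lemma Phi_inj: "inj_on Phi (cball 0 1)"
proof (rule inj_onI)
  fix x y :: "complex^5" assume x: "x \<in> cball 0 1" and y: "y \<in> cball 0 1" and e: "Phi x = Phi y"
  have e1: "x$1 = y$1" "x$3 = y$3" "x$4 = y$4" "x$5 = y$5"
    using e by (metis Phi_nth)+
  have e5: "x$1 * x$2 = y$1 * y$2" using e by (metis Phi_nth(5))
  have e6: "x$2 * (1 - x$3 + 2 * (x$1 * x$2)) = y$2 * (1 - x$3 + 2 * (x$1 * x$2))"
    using e e1 e5 by (metis Phi_nth(6))
  have "x$2 = y$2"
  proof (cases "x$1 = 0")
    case False then show ?thesis using e5 e1 by simp
  next
    case z: True
    show ?thesis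
    proof (cases "x$3 = 1")
      case False then show ?thesis using e6 z by simp
    next
      case True
      have nx: "(norm x)^2 \<le> 1" and ny: "(norm y)^2 \<le> 1" using x y by (auto simp: power_le_one)
      have c3: "(cmod (x$3))^2 = 1" "(cmod (y$3))^2 = 1" using True e1 by auto
      have "(cmod (x$2))^2 + 1 \<le> 1" using nx c3 unfolding normsq5
        using zero_le_power2[of "cmod (x$1)"] zero_le_power2[of "cmod (x$4)"] zero_le_power2[of "cmod (x$5)"]
        by linarith
      moreover have "(cmod (y$2))^2 + 1 \<le> 1" using ny c3 unfolding normsq5
        using zero_le_power2[of "cmod (y$1)"] zero_le_power2[of "cmod (y$4)"] zero_le_power2[of "cmod (y$5)"]
        by linarith
      ultimately show ?thesis by simp
    qed
  qed
  then show "x = y" unfolding vec_eq_iff using e1 exhaust_5 by metis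
qed



lemma norm_E: "norm (E k c) = cmod c"
proof -
  have "\<And>i. (cmod (E k c $ i))\<^sup>2 = (if i = k then (cmod c)^2 else 0)" by simp
  then have "(\<Sum>i\<in>UNIV. (cmod (E k c $ i))\<^sup>2) = (cmod c)^2"
    by simp
  then show ?thesis unfolding norm_vec_def L2_set_def by simp
qed

lemma E_add: "E k a + E k b = E k (a + b)" by (simp add: vec_eq_iff)
lemma E_diff: "E k a - E k b = E k (a - b)" by (simp add: vec_eq_iff)
lemma E_zero[simp]: "E k 0 = 0" by (simp add: vec_eq_iff)
lemma E_scale: "E k (h * a) = h *s E k a" by (simp add: vec_eq_iff)

definition Dsc :: "real \<Rightarrow> complex \<Rightarrow> complex^8" where
  "Dsc r z = E 1 (of_real r * z) + E 2 (of_real (1 - 2 * r^2)) + E 5 (of_real (- (r^2)))"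

definition gam :: "real \<Rightarrow> complex \<Rightarrow> complex^5" where
  "gam r z = (\<chi> j. if j = 1 then of_real r * z else if j = 2 then - of_real r * cnj z
     else if j = 3 then of_real (1 - 2 * r^2) else 0)"

lemma gam_nth: "gam r z $ 1 = of_real r * z" "gam r z $ 2 = - of_real r * cnj z"
  "gam r z $ 3 = of_real (1 - 2 * r^2)" "gam r z $ 4 = 0" "gam r z $ 5 = 0"
  by (simp_all add: gam_def)

lemma gam_in: assumes "0 \<le> r" "r \<le> 1/2" "cmod z = 1" shows "gam r z \<in> cball 0 1"
proof -
  have a: "(cmod (gam r z $ 1))^2 = r^2" "(cmod (gam r z $ 2))^2 = r^2"
    "(cmod (gam r z $ 3))^2 = (1 - 2*r^2)^2" "(cmod (gam r z $ 4))^2 = 0" "(cmod (gam r z $ 5))^2 = 0"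
  proof -
    show "(cmod (gam r z $ 1))^2 = r^2" using assms by (simp add: gam_nth norm_mult)
    show "(cmod (gam r z $ 2))^2 = r^2" using assms by (simp add: gam_nth norm_mult)
    show "(cmod (gam r z $ 3))^2 = (1 - 2*r^2)^2" by (simp only: gam_nth norm_of_real power2_abs)
  qed (simp_all add: gam_nth)
  have "r^2 \<le> (1/2)^2" using assms by (intro power_mono) auto
  then have "r^2 \<le> 1/4" by (simp add: power2_eq_square)
  then have m: "r^2 * r^2 \<le> r^2 * (1/4)" by (intro mult_left_mono) simp_all
  have sq: "(1 - 2*r^2)^2 = 1 - 4*r^2 + 4*(r^2*r^2)" by (simp add: power2_eq_square algebra_simps)
  have nn: "0 \<le> r^2 * r^2" by simp
  have "(norm (gam r z))^2 \<le> 1" unfolding normsq5 a sq using m nn by linarith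
  then have "\<bar>norm (gam r z)\<bar> \<le> 1" by (simp only: abs_square_le_1)
  then have "norm (gam r z) \<le> 1" by simp
  then show ?thesis by simp
qed

lemma Phi_gam: assumes "cmod z = 1" shows "Phi (gam r z) = Dsc r z"
proof -
  have zz: "z * cnj z = 1" using assms complex_norm_square[of z] by simp
  have p: "of_real r * z * gam r z $ 2 = of_real (- (r^2))"
  proof -
    have "of_real r * z * (- of_real r * cnj z) = - (of_real r * of_real r) * (z * cnj z)"
      by (simp add: algebra_simps)
    also have "\<dots> = - (of_real r * of_real r)" using zz by simp
    also have "\<dots> = of_real (- (r^2))" by (simp add: power2_eq_square)
    finally show ?thesis unfolding gam_nth(2) .
  qed
  have q: "1 - of_real (1 - 2 * r^2) + 2 * of_real (- (r^2)) = (0::complex)" by simp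
  have "Phi (gam r z) = E 1 (gam r z $ 1) + E 2 (gam r z $ 3) + E 3 (gam r z $ 4) + E 4 (gam r z $ 5)
     + E 5 (gam r z $ 1 * gam r z $ 2) + E 6 (gam r z $ 2 * (1 - gam r z $ 3 + 2 * (gam r z $ 1 * gam r z $ 2)))"
    by (simp only: Phi_def)
  also have "\<dots> = E 1 (of_real r * z) + E 2 (of_real (1 - 2 * r^2)) + E 5 (of_real (- (r^2)))"
    by (simp only: p q gam_nth(1,3,4,5) mult_zero_right E_zero add_0_right)
  also have "\<dots> = Dsc r z" by (simp only: Dsc_def)
  finally show ?thesis .
qed

lemma Dsc0: "Dsc 0 z = Dsc 0 1" by (simp add: Dsc_def)

lemma Dsc_deriv: "(Dsc r has_derivative (\<lambda>h. h *s E 1 (of_real r))) (at z)"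
  unfolding Dsc_def
  apply (rule has_derivative_eq_rhs)
   apply (rule derivative_intros bounded_linear.has_derivative[OF bl_E])+
  apply (simp add: fun_eq_iff vec_eq_iff)
  done

lemma cont_E[continuous_intros]: "continuous F g \<Longrightarrow> continuous F (\<lambda>x. E k (g x))"
  by (rule bounded_linear.continuous[OF bl_E])

lemma Dsc_cont_r: "continuous (at r) (\<lambda>r. Dsc r z)"
  unfolding Dsc_def by (intro continuous_intros)

lemma lin4: "(a::real) \<le> d \<Longrightarrow> D \<le> d \<Longrightarrow> b = 2 * D \<Longrightarrow> c = D \<Longrightarrow> a + b + c \<le> 4 * d"
  by linarith

lemma Dsc_dist: assumes "0 \<le> r" "r \<le> 1/2" "0 \<le> s" "s \<le> 1/2" "cmod z \<le> 1"
  shows "dist (Dsc s z) (Dsc r z) \<le> 4 * \<bar>s - r\<bar>"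
proof -
  have "Dsc s z - Dsc r z = E 1 (of_real (s - r) * z) + E 2 (of_real (2 * (r^2 - s^2))) + E 5 (of_real (r^2 - s^2))"
    unfolding Dsc_def by (simp add: vec_eq_iff algebra_simps)
  then have 1: "dist (Dsc s z) (Dsc r z) \<le> cmod (of_real (s - r) * z) + cmod (of_real (2 * (r^2 - s^2)) :: complex) + cmod (of_real (r^2 - s^2) :: complex)"
    unfolding dist_norm by (metis norm_E norm_triangle_le add_mono order_refl)
  have "cmod (of_real (s - r) * z) = \<bar>s - r\<bar> * cmod z" by (simp only: norm_mult norm_of_real)
  then have a: "cmod (of_real (s - r) * z) \<le> \<bar>s - r\<bar>" using assms(5)
    by (simp add: mult_left_le)
  have D: "\<bar>r^2 - s^2\<bar> \<le> \<bar>s - r\<bar>"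
  proof -
    have "\<bar>r^2 - s^2\<bar> = \<bar>s - r\<bar> * \<bar>s + r\<bar>" by (simp add: power2_eq_square abs_mult[symmetric] algebra_simps)
    also have "\<dots> \<le> \<bar>s - r\<bar> * 1" using assms by (intro mult_left_mono) auto
    finally show ?thesis by simp
  qed
  have b: "cmod (of_real (2 * (r^2 - s^2)) :: complex) = 2 * \<bar>r^2 - s^2\<bar>"
    by (simp only: norm_of_real abs_mult abs_numeral)
  have c: "cmod (of_real (r^2 - s^2) :: complex) = \<bar>r^2 - s^2\<bar>"
    by (simp only: norm_of_real)
  from 1 lin4[OF a D b c] show ?thesis by linarith
qed



lemma disc_bound:
  assumes f: "holo_fun_on V f" and sub: "Dsc r ` cball 0 1 \<subseteq> V"
    and r: "0 \<le> r" "r \<le> 1/2"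
    and B: "\<forall>w\<in>Phi ` cball 0 1. norm (f w) \<le> B"
    and z: "z \<in> cball 0 1"
  shows "norm (f (Dsc r z)) \<le> B"
proof -
  let ?g = "\<lambda>z. f (Dsc r z)"
  have fd: "\<forall>y\<in>V. \<exists>L. (f has_derivative L) (at y) \<and> (\<forall>c v. L (c *s v) = c * L v)"
    using f holo_fun_on_def by auto
  have hd: "\<exists>d. (?g has_field_derivative d) (at w)" if w: "w \<in> cball 0 1" for w
  proof -
    have "Dsc r w \<in> V" using sub w by blast
    then obtain L where L: "(f has_derivative L) (at (Dsc r w))" "\<forall>c v. L (c *s v) = c * L v"
      using fd by blast
    have "((f \<circ> Dsc r) has_derivative (L \<circ> (\<lambda>h. h *s E 1 (of_real r)))) (at w)"
      by (rule diff_chain_at[OF Dsc_deriv L(1)])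
    moreover have "L \<circ> (\<lambda>h. h *s E 1 (of_real r)) = (*) (L (E 1 (of_real r)))"
      using L(2) by (auto simp: fun_eq_iff mult.commute)
    ultimately have "(?g has_field_derivative (L (E 1 (of_real r)))) (at w)"
      unfolding has_field_derivative_def by (simp add: o_def)
    then show ?thesis by blast
  qed
  have hol: "?g holomorphic_on ball 0 1"
    unfolding holomorphic_on_def field_differentiable_def
    using hd by (meson ball_subset_cball has_field_derivative_at_within subsetD)
  have cont: "continuous_on (cball 0 1) ?g"
    by (rule continuous_at_imp_continuous_on) (use hd DERIV_isCont in blast)
  show ?thesis
  proof (rule maximum_modulus_frontier[of ?g "cball 0 1" B z])
    show "?g holomorphic_on interior (cball 0 1)" using hol by simp
    show "continuous_on (closure (cball 0 1)) ?g" using cont by simp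
    show "bounded (cball (0::complex) 1)" by simp
    show "z \<in> cball 0 1" by (rule z)
    fix w :: complex assume "w \<in> frontier (cball 0 1)"
    then have w: "cmod w = 1" by simp
    have "Dsc r w = Phi (gam r w)" using Phi_gam[OF w] by simp
    moreover have "gam r w \<in> cball 0 1" using gam_in[OF r w] .
    ultimately show "norm (?g w) \<le> B" using B by auto
  qed
qed


lemma Dsc_nth: "Dsc r z $ 1 = of_real r * z" "Dsc r z $ 5 = of_real (- (r^2))"
  by (simp_all add: Dsc_def)

lemma p_notin: "Dsc (1/2) 0 \<notin> Phi ` cball 0 1"
proof
  assume "Dsc (1/2) 0 \<in> Phi ` cball 0 1"
  then obtain x where x0: "Dsc (1/2) 0 = Phi x" by force
  note x = x0[symmetric]
  have "x$1 = 0" using arg_cong[OF x, of "\<lambda>v. v$1"] by (simp add: Phi_nth Dsc_nth)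
  moreover have "x$1 * x$2 = of_real (- ((1/2)^2))" using arg_cong[OF x, of "\<lambda>v. v$5"] by (simp add: Phi_nth Dsc_nth)
  ultimately show False by simp
qed

lemma Phi_cont: "continuous_on S Phi"
  by (rule has_derivative_continuous_on, rule has_derivative_at_withinI, rule Phi_deriv)

lemma no_stein: "\<not> has_stein_nbhd_basis (Phi ` cball 0 1)"
proof
  assume hs: "has_stein_nbhd_basis (Phi ` cball 0 1)"
  define A where "A = Phi ` cball 0 1"
  define p where "p = Dsc (1/2) 0"
  have pA: "p \<notin> A" unfolding A_def p_def by (rule p_notin)
  have "open (- {p})" by auto
  moreover have "A \<subseteq> - {p}" using pA by auto
  ultimately obtain V where V: "stein_open V" "A \<subseteq> V" "V \<subseteq> - {p}"
    using hs unfolding has_stein_nbhd_basis_def A_def by blast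
  have oV: "open V" using V(1) stein_open_def by blast
  have cA: "compact A" unfolding A_def by (rule compact_continuous_image[OF Phi_cont compact_cball])
  define H where "H = holo_hull V A"
  have cH: "compact H" using V(1) cA V(2) unfolding stein_open_def H_def by blast
  have HV: "H \<subseteq> V" unfolding H_def holo_hull_def by blast
  define S where "S = {0..1/2::real}"
  define T where "T = {r\<in>S. Dsc r ` cball 0 1 \<subseteq> V}"
  have TH: "T = {r\<in>S. Dsc r ` cball 0 1 \<subseteq> H}"
  proof
    show "{r\<in>S. Dsc r ` cball 0 1 \<subseteq> H} \<subseteq> T" unfolding T_def using HV by blast
    show "T \<subseteq> {r\<in>S. Dsc r ` cball 0 1 \<subseteq> H}"
    proof
      fix r assume r: "r \<in> T"
      have rS: "0 \<le> r" "r \<le> 1/2" and sub: "Dsc r ` cball 0 1 \<subseteq> V" using r unfolding T_def S_def by auto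
      have "Dsc r w \<in> H" if w: "w \<in> cball 0 1" for w
        unfolding H_def holo_hull_def
      proof (intro CollectI conjI allI impI)
        show "Dsc r w \<in> V" using sub w by blast
        fix f B assume f: "holo_fun_on V f" and B: "\<forall>w\<in>A. norm (f w) \<le> B"
        show "norm (f (Dsc r w)) \<le> B"
          by (rule disc_bound[OF f sub rS _ w]) (use B A_def in simp)
      qed
      then show "r \<in> {r\<in>S. Dsc r ` cball 0 1 \<subseteq> H}" using r unfolding T_def by blast
    qed
  qed
  have clo: "closedin (top_of_set S) T"
  proof -
    have "T = S \<inter> (\<Inter>w\<in>cball 0 1. (\<lambda>r. Dsc r w) -` H)" unfolding TH by auto
    moreover have "closed (\<Inter>w\<in>cball 0 1. (\<lambda>r. Dsc r w) -` H)"
      by (intro closed_INT ballI continuous_closed_vimage compact_imp_closed[OF cH] Dsc_cont_r)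
    ultimately show ?thesis by (simp add: closedin_closed_Int)
  qed
  have opn: "openin (top_of_set S) T"
    unfolding openin_euclidean_subtopology_iff
  proof (intro conjI ballI)
    show "T \<subseteq> S" unfolding T_def by blast
    fix r assume r: "r \<in> T"
    have rS: "0 \<le> r" "r \<le> 1/2" and sub: "Dsc r ` cball 0 1 \<subseteq> V" using r unfolding T_def S_def by auto
    have "continuous_on (cball 0 1) (Dsc r)"
      by (rule has_derivative_continuous_on, rule has_derivative_at_withinI, rule Dsc_deriv)
    then have "compact (Dsc r ` cball 0 1)" by (rule compact_continuous_image[OF _ compact_cball])
    then obtain \<epsilon> where e: "\<epsilon> > 0" "(\<Union>x\<in>Dsc r ` cball 0 1. ball x \<epsilon>) \<subseteq> V"
      using compact_subset_open_imp_ball_epsilon_subset[OF _ oV sub] by blast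
    show "\<exists>e>0. \<forall>s\<in>S. dist s r < e \<longrightarrow> s \<in> T"
    proof (intro exI conjI ballI impI)
      show "\<epsilon> / 4 > 0" using e by simp
      fix s assume s: "s \<in> S" and d: "dist s r < \<epsilon> / 4"
      have sS: "0 \<le> s" "s \<le> 1/2" using s unfolding S_def by auto
      have "Dsc s w \<in> V" if w: "w \<in> cball 0 1" for w
      proof -
        have "dist (Dsc s w) (Dsc r w) \<le> 4 * \<bar>s - r\<bar>"
          by (rule Dsc_dist[OF rS sS]) (use w in simp)
        also have "\<dots> < \<epsilon>" using d by (simp add: dist_real_def)
        finally have "Dsc s w \<in> ball (Dsc r w) \<epsilon>" by (simp add: dist_commute)
        then show ?thesis using e(2) w by blast
      qed
      then show "s \<in> T" unfolding T_def using s by blast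
    qed
  qed
  have "0 \<in> T"
  proof -
    have "Dsc 0 1 = Phi (gam 0 1)" using Phi_gam[of 1 0] by simp
    moreover have "gam 0 1 \<in> cball 0 1" by (rule gam_in) auto
    ultimately have "Dsc 0 1 \<in> V" using V(2) unfolding A_def by blast
    then have "\<forall>w. Dsc 0 w \<in> V" using Dsc0 by metis
    then show ?thesis unfolding T_def S_def by auto
  qed
  then have "T = S" using connected_clopen[of S] clo opn unfolding S_def by auto
  then have "(1/2::real) \<in> T" unfolding S_def by auto
  then have "p \<in> V" unfolding T_def p_def by auto
  then show False using V(3) by auto
qed

theorem mainTheorem10:
  shows "\<exists>\<Phi> :: complex^5 \<Rightarrow> complex^8.
           smooth_on_set (cball 0 1) \<Phi> \<and>
           inj_on \<Phi> (cball 0 1) \<and>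
           holo_embedding (ball 0 1) \<Phi> \<and>
           \<not> has_stein_nbhd_basis (\<Phi> ` cball 0 1)"
proof (intro exI conjI)
  show "smooth_on_set (cball 0 1) Phi"
    unfolding smooth_on_set_def smooth_on_def using sm_Phi[unfolded sm_def] by blast
  show "inj_on Phi (cball 0 1)" by (rule Phi_inj)
  show "\<not> has_stein_nbhd_basis (Phi ` cball 0 1)" by (rule no_stein)
  show "holo_embedding (ball 0 1) Phi"
    unfolding holo_embedding_def
  proof (intro conjI ballI)
    show "holo_map_on (ball 0 1) Phi"
      unfolding holo_map_on_def using Phi_deriv DPhi_clin by blast
    show "inj_on Phi (ball 0 1)" using Phi_inj by (rule inj_on_subset) auto
    fix x :: "complex^5" assume x: "x \<in> ball 0 1"
    have "frechet_derivative Phi (at x) = DPhi x" using frechet_derivative_at[OF Phi_deriv] by simp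
    then show "inj (frechet_derivative Phi (at x))" using DPhi_inj x by simp
  next
    obtain g where g: "homeomorphism (cball 0 1) (Phi ` cball 0 1) Phi g"
      using homeomorphism_compact[OF compact_cball Phi_cont refl Phi_inj] by blast
    show "\<exists>g. homeomorphism (ball 0 1) (Phi ` ball 0 1) Phi g"
      using homeomorphism_of_subsets[OF g ball_subset_cball image_mono[OF ball_subset_cball] refl] by blast
  qed
qed

end
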